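(* Let $(\mathcal S,\mu)$ be a probability space and $a,b\ge0$. For all $W_1,W_2\in\mathcal W$, $$\|W_1^{(a,b)}-W_2^{(a,b)}\|_\square\le7\|W_1-W_2\|_\square.$$ Moreover, for every $W\in\mathcal W$, if $a>0$ then $\sup_x\lambda_{W^{(a,b)}}(x)\le e^{-1}/a$, and if $b>0$ then $\sup_y\lambda'_{W^{(a,b)}}(y)\le e^{-1}/b$.
   Context: $\mathcal W$ is the set of integrable measurable $W:\mathcal S^2\to[0,\infty)$ (not necessarily symmetric). Marginals: $\lambda_W(x)=\int W(x,y)\,d\mu(y)$ and $\lambda'_W(y)=\int W(x,y)\,d\mu(x)$ (values in $[0,\infty]$). For $a,b\ge0$, $W^{(a,b)}(x,y)=e^{-a\lambda_W(x)}W(x,y)e^{-b\lambda'_W(y)}$. Cut norm: $\|W\|_\square=\sup_{\|f\|_\infty,\|g\|_\infty\le1}|\int f(x)g(y)W(x,y)\,d\mu(x)d\mu(y)|$. *)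

theory Defs
  imports "HOL-Probability.Probability"
begin

definition kernels :: "'a measure \<Rightarrow> ('a \<times> 'a \<Rightarrow> real) set" where
  "kernels M = {W. W \<in> borel_measurable (M \<Otimes>\<^sub>M M) \<and> integrable (M \<Otimes>\<^sub>M M) W
                   \<and> (\<forall>z. 0 \<le> W z)}"

definition lmarg :: "'a measure \<Rightarrow> ('a \<times> 'a \<Rightarrow> real) \<Rightarrow> 'a \<Rightarrow> ennreal" where
  "lmarg M W x = (\<integral>\<^sup>+ y. ennreal (W (x, y)) \<partial>M)"

definition rmarg :: "'a measure \<Rightarrow> ('a \<times> 'a \<Rightarrow> real) \<Rightarrow> 'a \<Rightarrow> ennreal" where
  "rmarg M W y = (\<integral>\<^sup>+ x. ennreal (W (x, y)) \<partial>M)"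

text \<open>exp(-a * l) for l in [0,infinity], with exp(-a*infinity) = 0 for a > 0
  and exp(-0 * l) = 1.\<close>
definition exp_neg :: "real \<Rightarrow> ennreal \<Rightarrow> real" where
  "exp_neg a l = (if l = \<infinity> then (if a = 0 then 1 else 0) else exp (- a * enn2real l))"

definition tilt :: "'a measure \<Rightarrow> real \<Rightarrow> real \<Rightarrow> ('a \<times> 'a \<Rightarrow> real) \<Rightarrow> ('a \<times> 'a \<Rightarrow> real)" where
  "tilt M a b W = (\<lambda>(x, y). exp_neg a (lmarg M W x) * W (x, y) * exp_neg b (rmarg M W y))"

definition cut_norm :: "'a measure \<Rightarrow> ('a \<times> 'a \<Rightarrow> real) \<Rightarrow> real" where
  "cut_norm M W = (SUP fg \<in> {(f, g). f \<in> borel_measurable M \<and> g \<in> borel_measurable M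
                         \<and> (\<forall>x. \<bar>f x\<bar> \<le> 1) \<and> (\<forall>y. \<bar>g y\<bar> \<le> 1)}.
        \<bar>\<integral> z. fst fg (fst z) * snd fg (snd z) * W z \<partial>(M \<Otimes>\<^sub>M M)\<bar>)"

end

theory Submission
  imports Defs
begin


lemma exp_neg_nonneg: "0 \<le> exp_neg a l"
  by (simp add: exp_neg_def)

lemma exp_neg_le1: "0 \<le> a \<Longrightarrow> exp_neg a l \<le> 1"
  by (simp add: exp_neg_def enn2real_nonneg mult_nonneg_nonneg)

lemma exp_neg_fin: "0 \<le> t \<Longrightarrow> exp_neg a (ennreal t) = exp (- a * t)"
  by (simp add: exp_neg_def)

lemma exp_neg_meas[measurable]:
  assumes [measurable]: "l \<in> borel_measurable M"
  shows "(\<lambda>x. exp_neg a (l x)) \<in> borel_measurable M"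
  unfolding exp_neg_def
proof (rule measurable_If)
  show "(\<lambda>x. exp (- a * enn2real (l x))) \<in> borel_measurable M" by measurable
  have "{x \<in> space M. l x = \<infinity>} = l -` {\<infinity>} \<inter> space M" by auto
  also have "\<dots> \<in> sets M" by (rule measurable_sets[OF assms]) auto
  finally show "{x \<in> space M. l x = \<infinity>} \<in> sets M" .
qed simp

lemma ate: fixes a t :: real assumes "0 \<le> a" "0 \<le> t" shows "a * t * exp (-(a*t)) \<le> exp (-1)"
proof -
  have "a*t \<le> exp (a*t - 1)" using exp_ge_add_one_self[of "a*t - 1"] by simp
  then have "a*t * exp (-(a*t)) \<le> exp (a*t - 1) * exp (-(a*t))"
    by (simp add: mult_right_mono)
  also have "\<dots> = exp (-1)" by (simp add: exp_add[symmetric])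
  finally show ?thesis .
qed

lemma one_minus_exp: "0 \<le> (x::real) \<Longrightarrow> 1 - exp (-x) \<le> x"
  using exp_ge_add_one_self[of "-x"] by simp

lemma key_ineq:
  fixes a p t :: real
  assumes a: "0 \<le> a" and p: "0 \<le> p" and t: "0 \<le> t"
  shows "abs (exp (-a*p) - exp (-a*t)) * t \<le> (1 + exp (-1)) * \<bar>p - t\<bar>"
proof (cases "p \<le> t")
  case True
  define d where "d = t - p"
  have d: "0 \<le> d" using True d_def by simp
  have e: "exp (-a*t) = exp (-a*p) * exp (-(a*d))"
    by (simp add: d_def exp_add[symmetric] algebra_simps)
  have q: "0 \<le> 1 - exp (-(a*d))" using a d by simp
  have q2: "1 - exp (-(a*d)) \<le> a*d" using one_minus_exp[of "a*d"] a d by simp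
  have e1: "exp (-a*p) - exp (-a*t) = exp (-a*p) * (1 - exp (-(a*d)))"
    unfolding e by (simp add: right_diff_distrib)
  have e2: "abs (exp (-a*p) - exp (-a*t)) = exp (-a*p) * (1 - exp (-(a*d)))"
    unfolding e1 using q by simp
  have "abs (exp (-a*p) - exp (-a*t)) * t = exp (-a*p) * (1 - exp (-(a*d))) * p + exp (-a*p) * (1 - exp (-(a*d))) * d"
    unfolding e2 by (simp add: d_def distrib_left[symmetric])
  also have "exp (-a*p) * (1 - exp (-(a*d))) * p \<le> exp (-a*p) * (a*d) * p"
    using q2 p by (simp add: mult_left_mono mult_right_mono)
  also have "exp (-a*p) * (a*d) * p = (a * p * exp (-(a*p))) * d" by (simp add: algebra_simps)
  also have "\<dots> \<le> exp (-1) * d" using ate[OF a p] d by (simp add: mult_right_mono)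
  also have "exp (-a*p) * (1 - exp (-(a*d))) * d \<le> 1 * 1 * d"
  proof -
    have "exp (-a*p) \<le> 1" using a p by (simp add: mult_nonneg_nonneg)
    moreover have "1 - exp (-(a*d)) \<le> 1" by simp
    ultimately show ?thesis using q d by (intro mult_right_mono mult_mono) auto
  qed
  finally show ?thesis using d by (simp add: d_def algebra_simps)
next
  case False
  define d where "d = p - t"
  have d: "0 \<le> d" using False d_def by simp
  have e: "exp (-a*p) = exp (-a*t) * exp (-(a*d))"
    by (simp add: d_def exp_add[symmetric] algebra_simps)
  have q: "0 \<le> 1 - exp (-(a*d))" using a d by simp
  have q2: "1 - exp (-(a*d)) \<le> a*d" using one_minus_exp[of "a*d"] a d by simp
  have e1: "exp (-a*p) - exp (-a*t) = - (exp (-a*t) * (1 - exp (-(a*d))))"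
    unfolding e by (simp add: right_diff_distrib)
  have "abs (exp (-a*p) - exp (-a*t)) * t = exp (-a*t) * (1 - exp (-(a*d))) * t"
    unfolding e1 using q by simp
  also have "\<dots> \<le> exp (-a*t) * (a*d) * t"
    using q2 t by (simp add: mult_left_mono mult_right_mono)
  also have "\<dots> = (a * t * exp (-(a*t))) * d" by (simp add: algebra_simps)
  also have "\<dots> \<le> exp (-1) * d" using ate[OF a t] d by (simp add: mult_right_mono)
  also have "\<dots> \<le> (1 + exp (-1)) * d" using d by (intro mult_right_mono) auto
  also have "\<dots> = (1 + exp (-1)) * \<bar>p - t\<bar>" using d by (simp add: d_def)
  finally show ?thesis .
qed



lemma tilt_eq: "tilt M a b W z = exp_neg a (lmarg M W (fst z)) * W z * exp_neg b (rmarg M W (snd z))"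
  by (cases z) (simp add: tilt_def)

lemma kernelsD:
  assumes "W \<in> kernels M"
  shows "W \<in> borel_measurable (M \<Otimes>\<^sub>M M)" "integrable (M \<Otimes>\<^sub>M M) W" "\<And>z. 0 \<le> W z"
  using assms by (auto simp: kernels_def)

lemma lmarg_meas:
  assumes pM: "prob_space M" and W[measurable]: "W \<in> borel_measurable (M \<Otimes>\<^sub>M M)"
  shows "lmarg M W \<in> borel_measurable M"
proof -
  interpret sigma_finite_measure M using prob_space_imp_sigma_finite[OF pM] .
  show ?thesis unfolding lmarg_def
    by (rule borel_measurable_nn_integral) measurable
qed

lemma rmarg_meas:
  assumes pM: "prob_space M" and W[measurable]: "W \<in> borel_measurable (M \<Otimes>\<^sub>M M)"
  shows "rmarg M W \<in> borel_measurable M"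
proof -
  interpret sigma_finite_measure M using prob_space_imp_sigma_finite[OF pM] .
  show ?thesis unfolding rmarg_def
    by (rule borel_measurable_nn_integral) measurable
qed

lemma lmarg_AE:
  assumes pM: "prob_space M" and K: "W \<in> kernels M"
  shows "AE x in M. integrable M (\<lambda>y. W (x,y)) \<and> lmarg M W x = ennreal (\<integral>y. W (x,y) \<partial>M)
           \<and> 0 \<le> (\<integral>y. W (x,y) \<partial>M)"
proof -
  interpret P: pair_sigma_finite M M
    unfolding pair_sigma_finite_def using prob_space_imp_sigma_finite[OF pM] by simp
  note Wk = kernelsD[OF K]
  show ?thesis using P.AE_integrable_fst'[OF Wk(2)]
  proof eventually_elim
    case (elim x)
    then show ?case using Wk(3)
      by (simp add: lmarg_def nn_integral_eq_integral integral_nonneg)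
  qed
qed

lemma rmarg_AE:
  assumes pM: "prob_space M" and K: "W \<in> kernels M"
  shows "AE y in M. integrable M (\<lambda>x. W (x,y)) \<and> rmarg M W y = ennreal (\<integral>x. W (x,y) \<partial>M)
           \<and> 0 \<le> (\<integral>x. W (x,y) \<partial>M)"
proof -
  interpret P: pair_sigma_finite M M
    unfolding pair_sigma_finite_def using prob_space_imp_sigma_finite[OF pM] by simp
  note Wk = kernelsD[OF K]
  have "integrable (M \<Otimes>\<^sub>M M) (\<lambda>(x,y). W (x,y))" using Wk(2) by simp
  from P.AE_integrable_snd[OF this]
  show ?thesis
  proof eventually_elim
    case (elim y)
    then show ?case using Wk(3)
      by (simp add: rmarg_def nn_integral_eq_integral integral_nonneg)
  qed
qed

lemma abs3: fixes p q r c w :: real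
  assumes "\<bar>p\<bar> \<le> 1" "\<bar>q\<bar> \<le> 1" "\<bar>r\<bar> \<le> 1"
  shows "\<bar>p * q * (c * w * r)\<bar> \<le> \<bar>c\<bar> * \<bar>w\<bar>"
proof -
  have "\<bar>p * q * (c * w * r)\<bar> = (\<bar>p\<bar> * \<bar>q\<bar> * \<bar>r\<bar>) * (\<bar>c\<bar> * \<bar>w\<bar>)"
    by (simp add: abs_mult algebra_simps)
  also have "\<dots> \<le> 1 * (\<bar>c\<bar> * \<bar>w\<bar>)"
    using assms by (intro mult_right_mono mult_le_one) auto
  finally show ?thesis by simp
qed

lemma abs2: fixes p q w :: real
  assumes "\<bar>p\<bar> \<le> 1" "\<bar>q\<bar> \<le> 1"
  shows "\<bar>p * q * w\<bar> \<le> \<bar>w\<bar>"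
  using abs3[OF assms, of 1 1 w] by simp

lemma int_fg:
  fixes W :: "'a \<times> 'a \<Rightarrow> real" and f g :: "'a \<Rightarrow> real"
  assumes W: "integrable (M \<Otimes>\<^sub>M M) W"
    and f[measurable]: "f \<in> borel_measurable M" and g[measurable]: "g \<in> borel_measurable M"
    and fb: "\<And>x. \<bar>f x\<bar> \<le> 1" and gb: "\<And>y. \<bar>g y\<bar> \<le> 1"
  shows "integrable (M \<Otimes>\<^sub>M M) (\<lambda>z. f (fst z) * g (snd z) * W z)"
proof (rule Bochner_Integration.integrable_bound[OF W])
  have [measurable]: "W \<in> borel_measurable (M \<Otimes>\<^sub>M M)" using W by simp
  show "(\<lambda>z. f (fst z) * g (snd z) * W z) \<in> borel_measurable (M \<Otimes>\<^sub>M M)" by measurable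
  show "AE z in M \<Otimes>\<^sub>M M. norm (f (fst z) * g (snd z) * W z) \<le> norm (W z)"
    using abs2[OF fb gb] by simp
qed

lemma cut_norm_ge:
  fixes W :: "'a \<times> 'a \<Rightarrow> real" and f g :: "'a \<Rightarrow> real"
  assumes W: "integrable (M \<Otimes>\<^sub>M M) W"
    and f: "f \<in> borel_measurable M" and g: "g \<in> borel_measurable M"
    and fb: "\<And>x. \<bar>f x\<bar> \<le> 1" and gb: "\<And>y. \<bar>g y\<bar> \<le> 1"
  shows "\<bar>\<integral>z. f (fst z) * g (snd z) * W z \<partial>(M \<Otimes>\<^sub>M M)\<bar> \<le> cut_norm M W"
proof -
  let ?S = "{(f::'a\<Rightarrow>real, g::'a\<Rightarrow>real). f \<in> borel_measurable M \<and> g \<in> borel_measurable M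
                         \<and> (\<forall>x. \<bar>f x\<bar> \<le> 1) \<and> (\<forall>y. \<bar>g y\<bar> \<le> 1)}"
  let ?h = "\<lambda>fg. \<bar>\<integral> z. fst fg (fst z) * snd fg (snd z) * W z \<partial>(M \<Otimes>\<^sub>M M)\<bar>"
  have bdd: "bdd_above (?h ` ?S)"
  proof (rule bdd_aboveI2)
    fix fg assume "fg \<in> ?S"
    then obtain f' g' where fg: "fg = (f', g')" and [measurable]: "f' \<in> borel_measurable M" "g' \<in> borel_measurable M"
      and b: "\<And>x. \<bar>f' x\<bar> \<le> 1" "\<And>y. \<bar>g' y\<bar> \<le> 1" by auto
    have I: "integrable (M \<Otimes>\<^sub>M M) (\<lambda>z. f' (fst z) * g' (snd z) * W z)"
      by (rule int_fg[OF W]) (use b in auto)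
    have "?h fg \<le> (\<integral>z. \<bar>f' (fst z) * g' (snd z) * W z\<bar> \<partial>(M \<Otimes>\<^sub>M M))"
      unfolding fg by simp
    also have "\<dots> \<le> (\<integral>z. \<bar>W z\<bar> \<partial>(M \<Otimes>\<^sub>M M))"
      by (rule integral_mono) (use I W abs2[OF b] in auto)
    finally show "?h fg \<le> (\<integral>z. \<bar>W z\<bar> \<partial>(M \<Otimes>\<^sub>M M))" .
  qed
  have "(f, g) \<in> ?S" using f g fb gb by auto
  from cSUP_upper[OF this bdd] show ?thesis unfolding cut_norm_def by simp
qed



lemma piece_left:
  fixes W1 W2 :: "'a \<times> 'a \<Rightarrow> real" and f g v :: "'a \<Rightarrow> real"
  assumes pM: "prob_space M" and a: "0 \<le> a" and K1: "W1 \<in> kernels M" and K2: "W2 \<in> kernels M"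
    and f[measurable]: "f \<in> borel_measurable M" and g[measurable]: "g \<in> borel_measurable M"
    and v[measurable]: "v \<in> borel_measurable M"
    and fb: "\<And>x. \<bar>f x\<bar> \<le> 1" and gb: "\<And>y. \<bar>g y\<bar> \<le> 1" and vb: "\<And>y. \<bar>v y\<bar> \<le> 1"
  shows "integrable (M \<Otimes>\<^sub>M M) (\<lambda>z. f (fst z) * g (snd z) *
            ((exp_neg a (lmarg M W1 (fst z)) - exp_neg a (lmarg M W2 (fst z))) * W2 z * v (snd z)))
    \<and> \<bar>\<integral>z. f (fst z) * g (snd z) *
            ((exp_neg a (lmarg M W1 (fst z)) - exp_neg a (lmarg M W2 (fst z))) * W2 z * v (snd z))
          \<partial>(M \<Otimes>\<^sub>M M)\<bar> \<le> (1 + exp (-1)) * cut_norm M (\<lambda>z. W1 z - W2 z)"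
proof -
  interpret P: pair_sigma_finite M M
    unfolding pair_sigma_finite_def using prob_space_imp_sigma_finite[OF pM] by simp
  note W1k = kernelsD[OF K1] and W2k = kernelsD[OF K2]
  note [measurable] = W1k(1) W2k(1)
  define u1 where "u1 x = exp_neg a (lmarg M W1 x)" for x
  define u2 where "u2 x = exp_neg a (lmarg M W2 x)" for x
  define K where "K x = \<bar>u1 x - u2 x\<bar>" for x
  define l1 where "l1 x = (\<integral>y. W1 (x,y) \<partial>M)" for x
  define l2 where "l2 x = (\<integral>y. W2 (x,y) \<partial>M)" for x
  have [measurable]: "lmarg M W1 \<in> borel_measurable M" "lmarg M W2 \<in> borel_measurable M"
    using lmarg_meas[OF pM] by auto
  have [measurable]: "u1 \<in> borel_measurable M" "u2 \<in> borel_measurable M"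
    unfolding u1_def u2_def by (auto intro: exp_neg_meas)
  have [measurable]: "K \<in> borel_measurable M" unfolding K_def by measurable
  have Kb: "0 \<le> K x" "K x \<le> 1" for x
    using exp_neg_nonneg[of a "lmarg M W1 x"] exp_neg_nonneg[of a "lmarg M W2 x"]
      exp_neg_le1[OF a, of "lmarg M W1 x"] exp_neg_le1[OF a, of "lmarg M W2 x"]
    by (auto simp: K_def u1_def u2_def)
  define F where "F z = f (fst z) * g (snd z) * ((u1 (fst z) - u2 (fst z)) * W2 z * v (snd z))" for z
  define G where "G z = K (fst z) * W2 z" for z
  have Gi: "integrable (M \<Otimes>\<^sub>M M) G"
  proof (rule Bochner_Integration.integrable_bound[OF W2k(2)])
    show "G \<in> borel_measurable (M \<Otimes>\<^sub>M M)" unfolding G_def by measurable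
    show "AE z in M \<Otimes>\<^sub>M M. norm (G z) \<le> norm (W2 z)"
      using Kb W2k(3) by (auto simp: G_def abs_mult intro!: mult_left_le_one_le)
  qed
  have FG: "\<bar>F z\<bar> \<le> G z" for z
    using abs3[OF fb[of "fst z"] gb[of "snd z"] vb[of "snd z"], of "u1 (fst z) - u2 (fst z)" "W2 z"] W2k(3)[of z]
    by (simp add: F_def G_def K_def)
  have Fi: "integrable (M \<Otimes>\<^sub>M M) F"
  proof (rule Bochner_Integration.integrable_bound[OF Gi])
    show "F \<in> borel_measurable (M \<Otimes>\<^sub>M M)" unfolding F_def by measurable
    show "AE z in M \<Otimes>\<^sub>M M. norm (F z) \<le> norm (G z)"
      by (rule AE_I2) (metis FG abs_ge_self order_trans real_norm_def)
  qed
  have s1: "\<bar>integral\<^sup>L (M \<Otimes>\<^sub>M M) F\<bar> \<le> integral\<^sup>L (M \<Otimes>\<^sub>M M) G"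
    using integral_abs_bound[of "M \<Otimes>\<^sub>M M" F] integral_mono[OF integrable_abs[OF Fi] Gi FG]
    by linarith
  have s2: "integral\<^sup>L (M \<Otimes>\<^sub>M M) G = (\<integral>x. K x * l2 x \<partial>M)"
    using P.integral_fst'[OF Gi] by (simp add: G_def l2_def)
  have KLi: "integrable M (\<lambda>x. K x * l2 x)"
    using P.integrable_fst'[OF Gi] by (simp add: G_def l2_def)
  have l1i: "integrable M l1" using P.integrable_fst'[OF W1k(2)] unfolding l1_def[abs_def] by simp
  have l2i: "integrable M l2" using P.integrable_fst'[OF W2k(2)] unfolding l2_def[abs_def] by simp
  have Di: "integrable M (\<lambda>x. \<bar>l1 x - l2 x\<bar>)" using l1i l2i by auto
  have s3: "(\<integral>x. K x * l2 x \<partial>M) \<le> (\<integral>x. (1 + exp (-1)) * \<bar>l1 x - l2 x\<bar> \<partial>M)"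
  proof (rule integral_mono_AE[OF KLi])
    show "integrable M (\<lambda>x. (1 + exp (-1)) * \<bar>l1 x - l2 x\<bar>)" using Di by auto
    show "AE x in M. K x * l2 x \<le> (1 + exp (- 1)) * \<bar>l1 x - l2 x\<bar>"
      using lmarg_AE[OF pM K1] lmarg_AE[OF pM K2]
    proof eventually_elim
      case (elim x)
      then have "u1 x = exp (- a * l1 x)" "u2 x = exp (- a * l2 x)" "0 \<le> l1 x" "0 \<le> l2 x"
        by (auto simp: u1_def u2_def l1_def l2_def exp_neg_fin)
      then show ?case using key_ineq[OF a, of "l1 x" "l2 x"] by (simp add: K_def)
    qed
  qed
  define s where "s x = sgn (l1 x - l2 x)" for x
  have [measurable]: "l1 \<in> borel_measurable M" "l2 \<in> borel_measurable M" using l1i l2i by auto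
  have [measurable]: "s \<in> borel_measurable M" unfolding s_def by measurable
  have sb: "\<bar>s x\<bar> \<le> 1" for x by (simp add: s_def sgn_if)
  have Dint: "integrable (M \<Otimes>\<^sub>M M) (\<lambda>z. W1 z - W2 z)" using W1k(2) W2k(2) by auto
  have Hi: "integrable (M \<Otimes>\<^sub>M M) (\<lambda>z. s (fst z) * (\<lambda>_. 1) (snd z) * (W1 z - W2 z))"
    by (rule int_fg[OF Dint]) (use sb in auto)
  have s4: "(\<integral>x. \<bar>l1 x - l2 x\<bar> \<partial>M) \<le> (\<integral>x. (\<integral>y. s (fst (x,y)) * (\<lambda>_. 1) (snd (x,y)) * (W1 (x,y) - W2 (x,y)) \<partial>M) \<partial>M)"
  proof (rule integral_mono_AE[OF Di])
    show "integrable M (\<lambda>x. (\<integral>y. s (fst (x,y)) * (\<lambda>_. 1) (snd (x,y)) * (W1 (x,y) - W2 (x,y)) \<partial>M))"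
      by (rule P.integrable_fst'[OF Hi])
    show "AE x in M. \<bar>l1 x - l2 x\<bar> \<le> (\<integral>y. s (fst (x,y)) * (\<lambda>_. 1) (snd (x,y)) * (W1 (x,y) - W2 (x,y)) \<partial>M)"
      using lmarg_AE[OF pM K1] lmarg_AE[OF pM K2]
    proof eventually_elim
      case (elim x)
      have d: "(\<integral>y. W1 (x,y) - W2 (x,y) \<partial>M) = l1 x - l2 x"
        using elim by (simp add: l1_def l2_def integral_diff)
      then have eq: "(\<integral>y. s (fst (x,y)) * (\<lambda>_. 1) (snd (x,y)) * (W1 (x,y) - W2 (x,y)) \<partial>M) = s x * (l1 x - l2 x)"
        by simp
      have "\<bar>l1 x - l2 x\<bar> = s x * (l1 x - l2 x)" by (auto simp: s_def sgn_if)
      then show ?case using d by simp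
    qed
  qed
  also have "\<dots> = (\<integral>z. s (fst z) * (\<lambda>_. 1) (snd z) * (W1 z - W2 z) \<partial>(M \<Otimes>\<^sub>M M))"
    by (rule P.integral_fst'[OF Hi])
  also have "\<dots> \<le> cut_norm M (\<lambda>z. W1 z - W2 z)"
    using cut_norm_ge[OF Dint, of s "\<lambda>_. 1"] sb by simp
  finally have s4: "(\<integral>x. \<bar>l1 x - l2 x\<bar> \<partial>M) \<le> cut_norm M (\<lambda>z. W1 z - W2 z)" .
  have "\<bar>integral\<^sup>L (M \<Otimes>\<^sub>M M) F\<bar> \<le> (1 + exp (-1)) * (\<integral>x. \<bar>l1 x - l2 x\<bar> \<partial>M)"
    using s1 s2 s3 by simp
  also have "\<dots> \<le> (1 + exp (-1)) * cut_norm M (\<lambda>z. W1 z - W2 z)"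
    using s4 by (intro mult_left_mono) auto
  finally show ?thesis using Fi unfolding F_def u1_def u2_def by simp
qed



lemma piece_right:
  fixes W1 W2 :: "'a \<times> 'a \<Rightarrow> real" and f g u :: "'a \<Rightarrow> real"
  assumes pM: "prob_space M" and b: "0 \<le> b" and K1: "W1 \<in> kernels M" and K2: "W2 \<in> kernels M"
    and f[measurable]: "f \<in> borel_measurable M" and g[measurable]: "g \<in> borel_measurable M"
    and u[measurable]: "u \<in> borel_measurable M"
    and fb: "\<And>x. \<bar>f x\<bar> \<le> 1" and gb: "\<And>y. \<bar>g y\<bar> \<le> 1" and ub: "\<And>y. \<bar>u y\<bar> \<le> 1"
  shows "integrable (M \<Otimes>\<^sub>M M) (\<lambda>z. f (fst z) * g (snd z) *
            (u (fst z) * W2 z * (exp_neg b (rmarg M W1 (snd z)) - exp_neg b (rmarg M W2 (snd z)))))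
    \<and> \<bar>\<integral>z. f (fst z) * g (snd z) *
            (u (fst z) * W2 z * (exp_neg b (rmarg M W1 (snd z)) - exp_neg b (rmarg M W2 (snd z))))
          \<partial>(M \<Otimes>\<^sub>M M)\<bar> \<le> (1 + exp (-1)) * cut_norm M (\<lambda>z. W1 z - W2 z)"
proof -
  interpret P: pair_sigma_finite M M
    unfolding pair_sigma_finite_def using prob_space_imp_sigma_finite[OF pM] by simp
  note W1k = kernelsD[OF K1] and W2k = kernelsD[OF K2]
  note [measurable] = W1k(1) W2k(1)
  have W1c: "integrable (M \<Otimes>\<^sub>M M) (\<lambda>(x,y). W1 (x,y))" using W1k(2) by simp
  have W2c: "integrable (M \<Otimes>\<^sub>M M) (\<lambda>(x,y). W2 (x,y))" using W2k(2) by simp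
  define u1 where "u1 x = exp_neg b (rmarg M W1 x)" for x
  define u2 where "u2 x = exp_neg b (rmarg M W2 x)" for x
  define K where "K x = \<bar>u1 x - u2 x\<bar>" for x
  define l1 where "l1 y = (\<integral>x. W1 (x,y) \<partial>M)" for y
  define l2 where "l2 y = (\<integral>x. W2 (x,y) \<partial>M)" for y
  have [measurable]: "rmarg M W1 \<in> borel_measurable M" "rmarg M W2 \<in> borel_measurable M"
    using rmarg_meas[OF pM] by auto
  have [measurable]: "u1 \<in> borel_measurable M" "u2 \<in> borel_measurable M"
    unfolding u1_def u2_def by (auto intro: exp_neg_meas)
  have [measurable]: "K \<in> borel_measurable M" unfolding K_def by measurable
  have Kb: "0 \<le> K x" "K x \<le> 1" for x
    using exp_neg_nonneg[of b "rmarg M W1 x"] exp_neg_nonneg[of b "rmarg M W2 x"]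
      exp_neg_le1[OF b, of "rmarg M W1 x"] exp_neg_le1[OF b, of "rmarg M W2 x"]
    by (auto simp: K_def u1_def u2_def)
  define F where "F z = f (fst z) * g (snd z) * ((u1 (snd z) - u2 (snd z)) * W2 z * u (fst z))" for z
  define G where "G z = K (snd z) * W2 z" for z
  have Gc: "(\<lambda>(x,y). K y * W2 (x,y)) = G" by (auto simp: G_def fun_eq_iff)
  have Gi: "integrable (M \<Otimes>\<^sub>M M) G"
  proof (rule Bochner_Integration.integrable_bound[OF W2k(2)])
    show "G \<in> borel_measurable (M \<Otimes>\<^sub>M M)" unfolding G_def by measurable
    show "AE z in M \<Otimes>\<^sub>M M. norm (G z) \<le> norm (W2 z)"
      using Kb W2k(3) by (auto simp: G_def abs_mult intro!: mult_left_le_one_le)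
  qed
  have FG: "\<bar>F z\<bar> \<le> G z" for z
    using abs3[OF fb[of "fst z"] gb[of "snd z"] ub[of "fst z"], of "u1 (snd z) - u2 (snd z)" "W2 z"] W2k(3)[of z]
    by (simp add: F_def G_def K_def)
  have Fi: "integrable (M \<Otimes>\<^sub>M M) F"
  proof (rule Bochner_Integration.integrable_bound[OF Gi])
    show "F \<in> borel_measurable (M \<Otimes>\<^sub>M M)" unfolding F_def by measurable
    show "AE z in M \<Otimes>\<^sub>M M. norm (F z) \<le> norm (G z)"
      by (rule AE_I2) (metis FG abs_ge_self order_trans real_norm_def)
  qed
  have s1: "\<bar>integral\<^sup>L (M \<Otimes>\<^sub>M M) F\<bar> \<le> integral\<^sup>L (M \<Otimes>\<^sub>M M) G"
    using integral_abs_bound[of "M \<Otimes>\<^sub>M M" F] integral_mono[OF integrable_abs[OF Fi] Gi FG]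
    by linarith
  have Gi': "integrable (M \<Otimes>\<^sub>M M) (\<lambda>(x,y). K y * W2 (x,y))" using Gi Gc by simp
  have s2: "integral\<^sup>L (M \<Otimes>\<^sub>M M) G = (\<integral>y. K y * l2 y \<partial>M)"
    using P.integral_snd[OF Gi'] Gc by (simp add: l2_def)
  have KLi: "integrable M (\<lambda>y. K y * l2 y)"
    using P.integrable_snd[OF Gi'] by (simp add: l2_def)
  have l1i: "integrable M l1" using P.integrable_snd[OF W1c] unfolding l1_def[abs_def] by simp
  have l2i: "integrable M l2" using P.integrable_snd[OF W2c] unfolding l2_def[abs_def] by simp
  have Di: "integrable M (\<lambda>x. \<bar>l1 x - l2 x\<bar>)" using l1i l2i by auto
  have s3: "(\<integral>x. K x * l2 x \<partial>M) \<le> (\<integral>x. (1 + exp (-1)) * \<bar>l1 x - l2 x\<bar> \<partial>M)"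
  proof (rule integral_mono_AE[OF KLi])
    show "integrable M (\<lambda>x. (1 + exp (-1)) * \<bar>l1 x - l2 x\<bar>)" using Di by auto
    show "AE x in M. K x * l2 x \<le> (1 + exp (- 1)) * \<bar>l1 x - l2 x\<bar>"
      using rmarg_AE[OF pM K1] rmarg_AE[OF pM K2]
    proof eventually_elim
      case (elim x)
      then have "u1 x = exp (- b * l1 x)" "u2 x = exp (- b * l2 x)" "0 \<le> l1 x" "0 \<le> l2 x"
        by (auto simp: u1_def u2_def l1_def l2_def exp_neg_fin)
      then show ?case using key_ineq[OF b, of "l1 x" "l2 x"] by (simp add: K_def)
    qed
  qed
  define s where "s x = sgn (l1 x - l2 x)" for x
  have [measurable]: "l1 \<in> borel_measurable M" "l2 \<in> borel_measurable M" using l1i l2i by auto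
  have [measurable]: "s \<in> borel_measurable M" unfolding s_def by measurable
  have sb: "\<bar>s x\<bar> \<le> 1" for x by (simp add: s_def sgn_if)
  have Dint: "integrable (M \<Otimes>\<^sub>M M) (\<lambda>z. W1 z - W2 z)" using W1k(2) W2k(2) by auto
  have Hi: "integrable (M \<Otimes>\<^sub>M M) (\<lambda>z. (\<lambda>_. 1) (fst z) * s (snd z) * (W1 z - W2 z))"
    by (rule int_fg[OF Dint]) (use sb in auto)
  have Hi': "integrable (M \<Otimes>\<^sub>M M) (\<lambda>(x,y). (\<lambda>_. 1) x * s y * (W1 (x,y) - W2 (x,y)))"
    using Hi by (simp add: split_beta')
  have "(\<integral>x. \<bar>l1 x - l2 x\<bar> \<partial>M) \<le> (\<integral>y. (\<integral>x. (\<lambda>_. 1) x * s y * (W1 (x,y) - W2 (x,y)) \<partial>M) \<partial>M)"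
  proof (rule integral_mono_AE[OF Di])
    show "integrable M (\<lambda>y. (\<integral>x. (\<lambda>_. 1) x * s y * (W1 (x,y) - W2 (x,y)) \<partial>M))"
      by (rule P.integrable_snd[OF Hi'])
    show "AE y in M. \<bar>l1 y - l2 y\<bar> \<le> (\<integral>x. (\<lambda>_. 1) x * s y * (W1 (x,y) - W2 (x,y)) \<partial>M)"
      using rmarg_AE[OF pM K1] rmarg_AE[OF pM K2]
    proof eventually_elim
      case (elim y)
      have d: "(\<integral>x. W1 (x,y) - W2 (x,y) \<partial>M) = l1 y - l2 y"
        using elim by (simp add: l1_def l2_def integral_diff)
      have "\<bar>l1 y - l2 y\<bar> = s y * (l1 y - l2 y)" by (auto simp: s_def sgn_if)
      then show ?case using d by simp
    qed
  qed
  also have "\<dots> = (\<integral>z. (\<lambda>(x,y). (\<lambda>_. 1) x * s y * (W1 (x,y) - W2 (x,y))) z \<partial>(M \<Otimes>\<^sub>M M))"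
    by (rule P.integral_snd[OF Hi'])
  also have "\<dots> = (\<integral>z. (\<lambda>_. 1) (fst z) * s (snd z) * (W1 z - W2 z) \<partial>(M \<Otimes>\<^sub>M M))"
    by (simp add: split_beta')
  also have "\<dots> \<le> cut_norm M (\<lambda>z. W1 z - W2 z)"
    using cut_norm_ge[OF Dint, of "\<lambda>_. 1" s] sb by simp
  finally have s4: "(\<integral>x. \<bar>l1 x - l2 x\<bar> \<partial>M) \<le> cut_norm M (\<lambda>z. W1 z - W2 z)" .
  have "\<bar>integral\<^sup>L (M \<Otimes>\<^sub>M M) F\<bar> \<le> (1 + exp (-1)) * (\<integral>x. \<bar>l1 x - l2 x\<bar> \<partial>M)"
    using s1 s2 s3 by simp
  also have "\<dots> \<le> (1 + exp (-1)) * cut_norm M (\<lambda>z. W1 z - W2 z)"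
    using s4 by (intro mult_left_mono) auto
  finally have fin: "\<bar>integral\<^sup>L (M \<Otimes>\<^sub>M M) F\<bar> \<le> (1 + exp (-1)) * cut_norm M (\<lambda>z. W1 z - W2 z)" .
  have FF: "(\<lambda>z. f (fst z) * g (snd z) *
            (u (fst z) * W2 z * (exp_neg b (rmarg M W1 (snd z)) - exp_neg b (rmarg M W2 (snd z))))) = F"
    by (auto simp: fun_eq_iff F_def u1_def u2_def algebra_simps)
  show ?thesis unfolding FF using Fi fin by simp
qed



lemma part1:
  fixes W1 W2 :: "'a \<times> 'a \<Rightarrow> real"
  assumes pM: "prob_space M" and a: "0 \<le> a" and b: "0 \<le> b"
    and K1: "W1 \<in> kernels M" and K2: "W2 \<in> kernels M"
  shows "cut_norm M (\<lambda>z. tilt M a b W1 z - tilt M a b W2 z) \<le> 7 * cut_norm M (\<lambda>z. W1 z - W2 z)"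
  unfolding cut_norm_def[of M "\<lambda>z. tilt M a b W1 z - tilt M a b W2 z"]
proof (rule cSUP_least)
  let ?S = "{(f::'a\<Rightarrow>real, g::'a\<Rightarrow>real). f \<in> borel_measurable M \<and> g \<in> borel_measurable M \<and> (\<forall>x. \<bar>f x\<bar> \<le> 1) \<and> (\<forall>y. \<bar>g y\<bar> \<le> 1)}"
  have "(\<lambda>_. 0::real, \<lambda>_. 0::real) \<in> ?S" by auto
  then show "?S \<noteq> {}" by blast
  note W1k = kernelsD[OF K1] and W2k = kernelsD[OF K2]
  note [measurable] = W1k(1) W2k(1)
  define u1 where "u1 x = exp_neg a (lmarg M W1 x)" for x
  define u2 where "u2 x = exp_neg a (lmarg M W2 x)" for x
  define v1 where "v1 x = exp_neg b (rmarg M W1 x)" for x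
  define v2 where "v2 x = exp_neg b (rmarg M W2 x)" for x
  have [measurable]: "lmarg M W1 \<in> borel_measurable M" "lmarg M W2 \<in> borel_measurable M"
    using lmarg_meas[OF pM] by auto
  have [measurable]: "rmarg M W1 \<in> borel_measurable M" "rmarg M W2 \<in> borel_measurable M"
    using rmarg_meas[OF pM] by auto
  have [measurable]: "u1 \<in> borel_measurable M" "u2 \<in> borel_measurable M"
     "v1 \<in> borel_measurable M" "v2 \<in> borel_measurable M"
    unfolding u1_def u2_def v1_def v2_def by (auto intro: exp_neg_meas)
  have ub: "\<bar>u1 x\<bar> \<le> 1" "\<bar>u2 x\<bar> \<le> 1" "\<bar>v1 x\<bar> \<le> 1" "\<bar>v2 x\<bar> \<le> 1" for x
    using exp_neg_nonneg exp_neg_le1[OF a] exp_neg_le1[OF b]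
    by (auto simp: u1_def u2_def v1_def v2_def)
  let ?c = "cut_norm M (\<lambda>z. W1 z - W2 z)"
  fix fg assume "fg \<in> ?S"
  then obtain f g where fg: "fg = (f, g)" and [measurable]: "f \<in> borel_measurable M" "g \<in> borel_measurable M"
      and fb: "\<And>x. \<bar>f x\<bar> \<le> 1" and gb: "\<And>y. \<bar>g y\<bar> \<le> 1" by auto
  define T1 where "T1 z = (f (fst z) * u1 (fst z)) * (g (snd z) * v1 (snd z)) * (W1 z - W2 z)" for z
  define T2 where "T2 z = f (fst z) * g (snd z) *
            ((exp_neg a (lmarg M W1 (fst z)) - exp_neg a (lmarg M W2 (fst z))) * W2 z * v1 (snd z))" for z
  define T3 where "T3 z = f (fst z) * g (snd z) *
            (u2 (fst z) * W2 z * (exp_neg b (rmarg M W1 (snd z)) - exp_neg b (rmarg M W2 (snd z))))" for z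
  have P2: "integrable (M \<Otimes>\<^sub>M M) T2 \<and> \<bar>integral\<^sup>L (M \<Otimes>\<^sub>M M) T2\<bar> \<le> (1 + exp (-1)) * ?c"
    unfolding T2_def[abs_def] by (rule piece_left[OF pM a K1 K2]) (use fb gb ub in auto)
  have P3: "integrable (M \<Otimes>\<^sub>M M) T3 \<and> \<bar>integral\<^sup>L (M \<Otimes>\<^sub>M M) T3\<bar> \<le> (1 + exp (-1)) * ?c"
    unfolding T3_def[abs_def] by (rule piece_right[OF pM b K1 K2]) (use fb gb ub in auto)
  have Dint: "integrable (M \<Otimes>\<^sub>M M) (\<lambda>z. W1 z - W2 z)" using W1k(2) W2k(2) by auto
  have fub: "\<bar>f x * u1 x\<bar> \<le> 1" "\<bar>g x * v1 x\<bar> \<le> 1" for x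
    using fb[of x] gb[of x] ub[of x] by (auto simp: abs_mult intro: mult_le_one)
  have T1i: "integrable (M \<Otimes>\<^sub>M M) T1" unfolding T1_def[abs_def]
    by (rule int_fg[OF Dint]) (use fub in auto)
  have P1: "\<bar>integral\<^sup>L (M \<Otimes>\<^sub>M M) T1\<bar> \<le> ?c" unfolding T1_def[abs_def]
    by (rule cut_norm_ge[OF Dint]) (use fub in auto)
  have eq: "(\<lambda>z. fst fg (fst z) * snd fg (snd z) * (tilt M a b W1 z - tilt M a b W2 z)) =
     (\<lambda>z. T1 z + T2 z + T3 z)"
    by (auto simp: fun_eq_iff fg tilt_eq T1_def T2_def T3_def u1_def u2_def v1_def v2_def algebra_simps)
  have "(\<integral>z. fst fg (fst z) * snd fg (snd z) * (tilt M a b W1 z - tilt M a b W2 z) \<partial>(M \<Otimes>\<^sub>M M))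
      = integral\<^sup>L (M \<Otimes>\<^sub>M M) T1 + integral\<^sup>L (M \<Otimes>\<^sub>M M) T2 + integral\<^sup>L (M \<Otimes>\<^sub>M M) T3"
    unfolding eq using T1i P2 P3 by simp
  moreover have "0 \<le> ?c" using P1 by linarith
  moreover have "exp (-1::real) \<le> 1" by simp
  ultimately have "(1 + exp (-1)) * ?c \<le> 2 * ?c" by (intro mult_right_mono) auto
  then show "\<bar>\<integral>z. fst fg (fst z) * snd fg (snd z) * (tilt M a b W1 z - tilt M a b W2 z) \<partial>(M \<Otimes>\<^sub>M M)\<bar> \<le> 7 * ?c"
    using \<open>(\<integral>z. _ \<partial>(M \<Otimes>\<^sub>M M)) = _\<close> P1 P2 P3 \<open>0 \<le> ?c\<close> by linarith
qed



lemma marg_bound: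
  fixes a :: real
  assumes a: "0 < a"
  shows "ennreal (exp_neg a l) * l \<le> ennreal (exp (-1) / a)"
proof (cases "l = \<infinity>")
  case True then show ?thesis using a by (simp add: exp_neg_def)
next
  case False
  then obtain t where t: "l = ennreal t" "0 \<le> t" by (cases l) auto
  have "exp (- a * t) * t \<le> exp (-1) / a"
    using ate[of a t] a t by (simp add: pos_le_divide_eq algebra_simps)
  then show ?thesis using t by (simp add: exp_neg_fin ennreal_mult[symmetric] ennreal_leI)
qed

lemma part2l:
  assumes pM: "prob_space M" and a: "0 < a" and b: "0 \<le> b" and K: "W \<in> kernels M"
  shows "(SUP x \<in> space M. lmarg M (tilt M a b W) x) \<le> ennreal (exp (-1) / a)"
proof (rule SUP_least)
  fix x assume x: "x \<in> space M"
  note Wk = kernelsD[OF K]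
  note [measurable] = Wk(1)
  have "lmarg M (tilt M a b W) x \<le> (\<integral>\<^sup>+ y. ennreal (exp_neg a (lmarg M W x)) * ennreal (W (x,y)) \<partial>M)"
    unfolding lmarg_def[of M "tilt M a b W"]
  proof (rule nn_integral_mono)
    fix y assume "y \<in> space M"
    have "tilt M a b W (x,y) \<le> exp_neg a (lmarg M W x) * W (x,y)"
      using exp_neg_le1[OF b] exp_neg_nonneg Wk(3)
      by (simp add: tilt_def mult_left_le mult_nonneg_nonneg)
    then show "ennreal (tilt M a b W (x, y)) \<le> ennreal (exp_neg a (lmarg M W x)) * ennreal (W (x, y))"
      by (simp add: ennreal_mult[symmetric] exp_neg_nonneg Wk(3) ennreal_leI)
  qed
  also have "\<dots> = ennreal (exp_neg a (lmarg M W x)) * lmarg M W x"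
    unfolding lmarg_def using x by (intro nn_integral_cmult) measurable
  also have "\<dots> \<le> ennreal (exp (-1) / a)" by (rule marg_bound[OF a])
  finally show "lmarg M (tilt M a b W) x \<le> ennreal (exp (-1) / a)" .
qed

lemma part2r:
  assumes pM: "prob_space M" and a: "0 \<le> a" and b: "0 < b" and K: "W \<in> kernels M"
  shows "(SUP y \<in> space M. rmarg M (tilt M a b W) y) \<le> ennreal (exp (-1) / b)"
proof (rule SUP_least)
  fix y assume y: "y \<in> space M"
  note Wk = kernelsD[OF K]
  note [measurable] = Wk(1)
  have "rmarg M (tilt M a b W) y \<le> (\<integral>\<^sup>+ x. ennreal (exp_neg b (rmarg M W y)) * ennreal (W (x,y)) \<partial>M)"
    unfolding rmarg_def[of M "tilt M a b W"]
  proof (rule nn_integral_mono)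
    fix x assume "x \<in> space M"
    have "tilt M a b W (x,y) \<le> exp_neg b (rmarg M W y) * W (x,y)"
    proof -
      have "tilt M a b W (x,y) = exp_neg a (lmarg M W x) * (exp_neg b (rmarg M W y) * W (x,y))"
        by (simp add: tilt_def algebra_simps)
      also have "\<dots> \<le> exp_neg b (rmarg M W y) * W (x,y)"
        using exp_neg_le1[OF a] exp_neg_nonneg Wk(3)
        by (simp add: mult_left_le_one_le mult_nonneg_nonneg)
      finally show ?thesis .
    qed
    then show "ennreal (tilt M a b W (x, y)) \<le> ennreal (exp_neg b (rmarg M W y)) * ennreal (W (x, y))"
      by (simp add: ennreal_mult[symmetric] exp_neg_nonneg Wk(3) ennreal_leI)
  qed
  also have "\<dots> = ennreal (exp_neg b (rmarg M W y)) * rmarg M W y"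
    unfolding rmarg_def using y by (intro nn_integral_cmult) measurable
  also have "\<dots> \<le> ennreal (exp (-1) / b)" by (rule marg_bound[OF b])
  finally show "rmarg M (tilt M a b W) y \<le> ennreal (exp (-1) / b)" .
qed


theorem mainTheorem12:
  fixes M :: "'a measure" and a b :: real
  assumes "prob_space M" and "0 \<le> a" and "0 \<le> b"
  shows "(\<forall>W1 \<in> kernels M. \<forall>W2 \<in> kernels M.
            cut_norm M (\<lambda>z. tilt M a b W1 z - tilt M a b W2 z)
              \<le> 7 * cut_norm M (\<lambda>z. W1 z - W2 z))
       \<and> (\<forall>W \<in> kernels M.
            (0 < a \<longrightarrow> (SUP x \<in> space M. lmarg M (tilt M a b W) x) \<le> ennreal (exp (-1) / a))
          \<and> (0 < b \<longrightarrow> (SUP y \<in> space M. rmarg M (tilt M a b W) y) \<le> ennreal (exp (-1) / b)))"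
  using part1[OF assms] part2l[OF assms(1) _ assms(3)] part2r[OF assms(1,2)] by blast

end
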